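(* If $f:(\Sigma+\mathbb A)^*\to(\Gamma+\mathbb A)^*$ is atom-oblivious, then it has a unique deatomization.
   Context: $\Sigma,\Gamma$ finite alphabets, $\mathbb A$ an infinite set of atoms. $f$ is atom-oblivious if $f(\pi(w))=\pi(f(w))$ for every string $w$ and every (not necessarily bijective) function $\pi:\mathbb A\to\mathbb A$, extended letterwise (identity on letters of $\Sigma,\Gamma$). An atom representation is an injective map $\alpha$ from $\mathbb A$ to atom blocks $\langle a^n\rangle$, $n\ge0$, with $\langle,\rangle,a$ fresh letters, extended letterwise to strings. A deatomization of $f$ is a function $\tilde f$ from strings that are concatenations of letters of $\Sigma$ and atom blocks to strings that are concatenations of letters of $\Gamma$ and atom blocks, such that $\tilde f(\alpha(w))=\alpha(f(w))$ for every $w\in(\Sigma+\mathbb A)^*$ and every atom representation $\alpha$. *)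

theory Defs
  imports Main "HOL-Library.Countable_Set"
begin

text \<open>Strings over \<Sigma>+A are lists of type ('s + 'a) list, letters of \<Sigma> being Inl,
atoms being Inr.  The fresh letters for atom blocks are the constructors of mk.\<close>

datatype mk = LAngle | RAngle | ALetter

definition atom_oblivious :: "(('s + 'a) list \<Rightarrow> ('g + 'a) list) \<Rightarrow> bool" where
  "atom_oblivious f \<longleftrightarrow>
     (\<forall>(\<pi> :: 'a \<Rightarrow> 'a) w. f (map (map_sum id \<pi>) w) = map (map_sum id \<pi>) (f w))"

definition atom_block :: "nat \<Rightarrow> ('c + mk) list" where
  "atom_block n = [Inr LAngle] @ replicate n (Inr ALetter) @ [Inr RAngle]"

definition blocks_str :: "('c + nat) list \<Rightarrow> ('c + mk) list" where
  "blocks_str xs = concat (map (\<lambda>x. case x of Inl c \<Rightarrow> [Inl c] | Inr n \<Rightarrow> atom_block n) xs)"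

definition block_strings :: "('c + mk) list set" where
  "block_strings = range blocks_str"

text \<open>An atom representation is an injective map from atoms to atom blocks;
an atom block is determined by its length n, so we represent it by n.\<close>
definition atom_rep :: "('a \<Rightarrow> nat) \<Rightarrow> bool" where
  "atom_rep \<alpha> \<longleftrightarrow> inj \<alpha>"

definition rep_str :: "('a \<Rightarrow> nat) \<Rightarrow> ('c + 'a) list \<Rightarrow> ('c + mk) list" where
  "rep_str \<alpha> w = blocks_str (map (map_sum id \<alpha>) w)"

definition deatomization ::
  "(('s + 'a) list \<Rightarrow> ('g + 'a) list) \<Rightarrow> (('s + mk) list \<Rightarrow> ('g + mk) list) \<Rightarrow> bool" where
  "deatomization f tf \<longleftrightarrow>
     (\<forall>x \<in> block_strings. tf x \<in> block_strings) \<and>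
     (\<forall>(\<alpha> :: 'a \<Rightarrow> nat) w. atom_rep \<alpha> \<longrightarrow> tf (rep_str \<alpha> w) = rep_str \<alpha> (f w))"

end

theory Submission
  imports Defs
begin

lemma rep_prefix:
  assumes "a \<noteq> b"
  shows "replicate n a @ b # r1 = replicate m a @ b # r2 \<Longrightarrow> n = m \<and> r1 = r2"
proof (induction n arbitrary: m)
  case 0 then show ?case using assms by (cases m) auto
next
  case (Suc n) then show ?case using assms by (cases m) auto
qed

lemma blocks_str_Cons: "blocks_str (x # xs) = (case x of Inl c \<Rightarrow> [Inl c] | Inr n \<Rightarrow> atom_block n) @ blocks_str xs"
  by (simp add: blocks_str_def)

lemma blocks_str_inj: "blocks_str xs = blocks_str ys \<Longrightarrow> xs = ys"
proof (induction xs arbitrary: ys)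
  case Nil then show ?case
    by (cases ys) (auto simp: blocks_str_def atom_block_def split: sum.splits)
next
  case (Cons x xs)
  show ?case
  proof (cases ys)
    case Nil then show ?thesis using Cons.prems
      by (auto simp: blocks_str_def atom_block_def split: sum.splits)
  next
    case (Cons y ys')
    note h = Cons.prems[unfolded Cons blocks_str_Cons]
    show ?thesis
    proof (cases x)
      case (Inl c) note xc = this
      show ?thesis
      proof (cases y)
        case (Inl d) then show ?thesis using h xc Cons Cons.IH by auto
      next
        case (Inr m) then show ?thesis using h xc by (auto simp: atom_block_def)
      qed
    next
      case (Inr n) note xn = this
      show ?thesis
      proof (cases y)
        case (Inl d) then show ?thesis using h xn by (auto simp: atom_block_def)
      next
        case (Inr m)
        have "replicate n (Inr ALetter) @ Inr RAngle # blocks_str xs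
            = replicate m (Inr ALetter) @ Inr RAngle # blocks_str ys'"
          using h xn Inr by (simp add: atom_block_def)
        from rep_prefix[OF _ this] have "n = m" "blocks_str xs = blocks_str ys'" by auto
        then show ?thesis using Cons Cons.IH xn Inr by auto
      qed
    qed
  qed
qed

theorem mainTheorem4:
  fixes f :: "('s + 'a) list \<Rightarrow> ('g + 'a) list"
  assumes "finite (UNIV :: 's set)" and "finite (UNIV :: 'g set)"
    and "infinite (UNIV :: 'a set)" and "countable (UNIV :: 'a set)"
    and "atom_oblivious f"
  shows "(\<exists>tf. deatomization f tf) \<and>
         (\<forall>tf1 tf2. deatomization f tf1 \<and> deatomization f tf2 \<longrightarrow>
             (\<forall>x \<in> block_strings. tf1 x = tf2 x))"
proof -
  obtain e :: "'a \<Rightarrow> nat" where e: "bij_betw e UNIV UNIV"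
    using countableE_infinite[OF assms(4,3)] by blast
  have ie: "inv e (e a) = a" for a using e by (simp add: bij_betw_def)
  have ei: "e (inv e n) = n" for n using e by (simp add: bij_betw_def surj_f_inv_f)
  have einj: "atom_rep e" using e by (simp add: atom_rep_def bij_betw_def)
  have mm: "map (map_sum id g) (map (map_sum id h) xs) = map (map_sum id (g \<circ> h)) xs"
    for g h and xs :: "('z + 'y) list"
    by (induction xs) (auto simp: sum.map_comp o_def id_def)
  define tf where "tf x = rep_str e (f (map (map_sum id (inv e)) (the_inv blocks_str x)))" for x
  have ti: "the_inv blocks_str (blocks_str ys) = ys" for ys :: "('s + nat) list"
    by (rule the_inv_f_f) (auto intro: injI blocks_str_inj)
  have "deatomization f tf"
    unfolding deatomization_def
  proof (intro conjI allI impI ballI)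
    fix x :: "('g + mk) list" show "tf x \<in> block_strings" for x
      by (simp add: tf_def rep_str_def block_strings_def)
  next
    fix \<alpha> :: "'a \<Rightarrow> nat" and w :: "('s + 'a) list" assume a: "atom_rep \<alpha>"
    have "map (map_sum id (inv e)) (the_inv blocks_str (rep_str \<alpha> w))
        = map (map_sum id (inv e \<circ> \<alpha>)) w"
      using ti[of "map (map_sum id \<alpha>) w"] by (simp add: rep_str_def sum.map_comp)
    hence "f (map (map_sum id (inv e)) (the_inv blocks_str (rep_str \<alpha> w)))
       = map (map_sum id (inv e \<circ> \<alpha>)) (f w)"
      using assms(5) by (simp add: atom_oblivious_def)
    moreover have "e \<circ> (inv e \<circ> \<alpha>) = \<alpha>" using ei by (auto simp: fun_eq_iff)
    moreover have "map_sum id e \<circ> map_sum id (inv e \<circ> \<alpha>) = map_sum (id::'g\<Rightarrow>'g) \<alpha>"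
    proof
      fix x :: "'g + 'a" show "(map_sum id e \<circ> map_sum id (inv e \<circ> \<alpha>)) x = map_sum id \<alpha> x"
        using ei by (cases x) auto
    qed
    ultimately show "tf (rep_str \<alpha> w) = rep_str \<alpha> (f w)"
      by (simp add: tf_def rep_str_def)
  qed
  moreover have "tf1 x = tf2 x"
    if d: "deatomization f tf1" "deatomization f tf2" and x: "x \<in> block_strings" for tf1 tf2 x
  proof -
    obtain ys where ys: "x = blocks_str ys" using x by (auto simp: block_strings_def)
    have "map_sum id e \<circ> map_sum id (inv e) = (id :: 's + nat \<Rightarrow> _)"
    proof
      fix x :: "'s + nat" show "(map_sum id e \<circ> map_sum id (inv e)) x = id x"
        using ei by (cases x) auto
    qed
    hence "x = rep_str e (map (map_sum id (inv e)) ys)"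
      by (simp add: ys rep_str_def)
    then show ?thesis using d einj by (simp add: deatomization_def)
  qed
  ultimately show ?thesis by blast
qed

end
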